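(* Let $s=(s_1,\ldots,s_n)$ be a sequence of positive integers. Then the local $h^\ast$-polynomial of the $s$-lecture hall simplex $P_n^s$ is \[ \ell^\ast(P_n^s;z)=\sum_{e\in\widetilde{I_n^s}}z^{\mathrm{asc}(e)}=\sum_{e\in\widetilde{I_n^s}}z^{\mathrm{des}(e)}. \]
   Context: $P_n^s=\{x\in\mathbb{R}^n: 0\le x_1/s_1\le\cdots\le x_n/s_n\le 1\}$. For a lattice $d$-simplex $\Delta=\mathrm{conv}(v^{(0)},\ldots,v^{(d)})\subset\mathbb{R}^n$, $\ell^\ast(\Delta;z)=\sum_{x\in\Pi^\circ_\Delta\cap\mathbb{Z}^{n+1}}z^{x_{n+1}}$ where $\Pi^\circ_\Delta=\{\sum_{i=0}^d\lambda_i(v^{(i)},1): 0<\lambda_i<1\}$. Set $s_0=s_{n+1}=1$ and let $\widetilde{I_n^s}$ be the set of integer sequences $(e_0,e_1,\ldots,e_{n+1})$ with $e_0=e_{n+1}=0$, $0\le e_i<s_i$ for $i\in[n]$, and $e_i/s_i\neq e_{i+1}/s_{i+1}$ for all $i\in\{0,\ldots,n\}$. For such $e$, an index $i\in\{0,\ldots,n\}$ is an ascent if $e_i/s_i<e_{i+1}/s_{i+1}$ and a descent if $e_i/s_i>e_{i+1}/s_{i+1}$; $\mathrm{asc}(e),\mathrm{des}(e)$ count them. *)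

theory Defs
  imports "HOL-Analysis.Analysis" "HOL-Computational_Algebra.Polynomial"
begin

text \<open>Points of R^n are modelled as functions nat => real with coordinates 1..n
  (all other coordinates are 0).\<close>

definition lecture_hall_simplex :: "nat \<Rightarrow> (nat \<Rightarrow> nat) \<Rightarrow> (nat \<Rightarrow> real) set" where
  "lecture_hall_simplex n s = {x.
     (\<forall>j. (j = 0 \<or> j > n) \<longrightarrow> x j = 0) \<and>
     (n \<ge> 1 \<longrightarrow> 0 \<le> x 1 / real (s 1)) \<and>
     (\<forall>i\<in>{1..<n}. x i / real (s i) \<le> x (i+1) / real (s (i+1))) \<and>
     (n \<ge> 1 \<longrightarrow> x n / real (s n) \<le> 1)}"

definition is_vertex :: "(nat \<Rightarrow> real) set \<Rightarrow> (nat \<Rightarrow> real) \<Rightarrow> bool" where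
  "is_vertex P v \<longleftrightarrow> v \<in> P \<and>
     \<not> (\<exists>a\<in>P. \<exists>b\<in>P. a \<noteq> b \<and> (\<exists>t. 0 < t \<and> t < 1 \<and> v = (\<lambda>j. (1 - t) * a j + t * b j)))"

text \<open>The open fundamental parallelepiped of the cone over the simplex with vertex set
  vertices(P): points (sum lambda_v v, sum lambda_v) with 0 < lambda_v < 1.\<close>
definition open_parallelepiped :: "(nat \<Rightarrow> real) set \<Rightarrow> ((nat \<Rightarrow> real) \<times> real) set" where
  "open_parallelepiped P = {((\<lambda>j. \<Sum>v\<in>{v. is_vertex P v}. lam v * v j), \<Sum>v\<in>{v. is_vertex P v}. lam v) | lam.
       \<forall>v. is_vertex P v \<longrightarrow> 0 < lam v \<and> lam v < 1}"

definition lattice_points :: "((nat \<Rightarrow> real) \<times> real) set \<Rightarrow> ((nat \<Rightarrow> real) \<times> real) set" where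
  "lattice_points S = {p \<in> S. (\<forall>j. fst p j \<in> \<int>) \<and> snd p \<in> \<int>}"

definition local_hstar :: "(nat \<Rightarrow> real) set \<Rightarrow> int poly" where
  "local_hstar P = (\<Sum>p\<in>lattice_points (open_parallelepiped P). monom 1 (nat \<lfloor>snd p\<rfloor>))"

definition s_ext :: "nat \<Rightarrow> (nat \<Rightarrow> nat) \<Rightarrow> nat \<Rightarrow> nat" where
  "s_ext n s i = (if i = 0 \<or> i = n + 1 then 1 else s i)"

definition ratio :: "nat \<Rightarrow> (nat \<Rightarrow> nat) \<Rightarrow> (nat \<Rightarrow> nat) \<Rightarrow> nat \<Rightarrow> real" where
  "ratio n s e i = real (e i) / real (s_ext n s i)"

definition I_tilde :: "nat \<Rightarrow> (nat \<Rightarrow> nat) \<Rightarrow> (nat \<Rightarrow> nat) set" where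
  "I_tilde n s = {e. e 0 = 0 \<and> e (n+1) = 0 \<and> (\<forall>j > n + 1. e j = 0) \<and>
      (\<forall>i\<in>{1..n}. e i < s i) \<and>
      (\<forall>i\<in>{0..n}. ratio n s e i \<noteq> ratio n s e (i+1))}"

definition asc :: "nat \<Rightarrow> (nat \<Rightarrow> nat) \<Rightarrow> (nat \<Rightarrow> nat) \<Rightarrow> nat" where
  "asc n s e = card {i\<in>{0..n}. ratio n s e i < ratio n s e (i+1)}"

definition des :: "nat \<Rightarrow> (nat \<Rightarrow> nat) \<Rightarrow> (nat \<Rightarrow> nat) \<Rightarrow> nat" where
  "des n s e = card {i\<in>{0..n}. ratio n s e i > ratio n s e (i+1)}"

end

theory Submission
  imports Defs
begin

definition VV :: "nat \<Rightarrow> (nat \<Rightarrow> nat) \<Rightarrow> nat \<Rightarrow> nat \<Rightarrow> real" where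
  "VV n s k j = (if k < j \<and> j \<le> n then real (s j) else 0)"

lemma lhs_mem:
  "x \<in> lecture_hall_simplex n s \<longleftrightarrow>
     (\<forall>j. (j = 0 \<or> j > n) \<longrightarrow> x j = 0) \<and>
     (n \<ge> 1 \<longrightarrow> 0 \<le> x 1 / real (s 1)) \<and>
     (\<forall>i\<in>{1..<n}. x i / real (s i) \<le> x (i+1) / real (s (i+1))) \<and>
     (n \<ge> 1 \<longrightarrow> x n / real (s n) \<le> 1)"
  unfolding lecture_hall_simplex_def by simp

lemma lhs_chain:
  assumes "x \<in> lecture_hall_simplex n s" "1 \<le> i" "i \<le> j" "j \<le> n"
  shows "x i / real (s i) \<le> x j / real (s j)"
  using assms(3,4)
proof (induction j rule: dec_induct)
  case base
  then show ?case by simp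
next
  case (step m)
  have "x m / real (s m) \<le> x (m+1) / real (s (m+1))"
    using assms(1,2) step by (auto simp: lhs_mem)
  then show ?case using step by simp
qed

lemma lhs_bounds:
  assumes "x \<in> lecture_hall_simplex n s" "1 \<le> i" "i \<le> n"
  shows "0 \<le> x i / real (s i) \<and> x i / real (s i) \<le> 1"
proof -
  have "x 1 / real (s 1) \<le> x i / real (s i)" using lhs_chain[OF assms(1), of 1 i] assms by simp
  moreover have "x i / real (s i) \<le> x n / real (s n)" using lhs_chain[OF assms(1), of i n] assms by simp
  ultimately show ?thesis using assms by (auto simp: lhs_mem)
qed

lemma VV_mem:
  assumes "k \<le> n" "\<forall>i\<in>{1..n}. s i > 0"
  shows "VV n s k \<in> lecture_hall_simplex n s"
  using assms unfolding lhs_mem VV_def by auto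

lemma VV_vertex:
  assumes "k \<le> n" and pos: "\<forall>i\<in>{1..n}. s i > 0"
  shows "is_vertex (lecture_hall_simplex n s) (VV n s k)"
  unfolding is_vertex_def
proof (intro conjI notI)
  show "VV n s k \<in> lecture_hall_simplex n s" using VV_mem assms by auto
next
  assume "\<exists>a\<in>lecture_hall_simplex n s. \<exists>b\<in>lecture_hall_simplex n s. a \<noteq> b \<and>
     (\<exists>t>0. t < 1 \<and> VV n s k = (\<lambda>j. (1 - t) * a j + t * b j))"
  then obtain a b t where a: "a \<in> lecture_hall_simplex n s" and b: "b \<in> lecture_hall_simplex n s"
    and ab: "a \<noteq> b" and t: "0 < t" "t < 1" and eq: "VV n s k = (\<lambda>j. (1 - t) * a j + t * b j)"
    by blast
  have "a j = b j" for j
  proof (cases "1 \<le> j \<and> j \<le> n")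
    case True
    have sp: "real (s j) > 0" using pos True by auto
    have ba: "0 \<le> a j / real (s j)" "a j / real (s j) \<le> 1" using lhs_bounds[OF a, of j] True by auto
    have bb: "0 \<le> b j / real (s j)" "b j / real (s j) \<le> 1" using lhs_bounds[OF b, of j] True by auto
    have ej: "VV n s k j / real (s j) = (1 - t) * (a j / real (s j)) + t * (b j / real (s j))"
      using fun_cong[OF eq, of j] sp by (simp add: field_simps)
    have "a j / real (s j) = b j / real (s j)"
    proof (cases "k < j")
      case True
      then have "VV n s k j / real (s j) = 1" using sp \<open>1 \<le> j \<and> j \<le> n\<close> by (simp add: VV_def)
      then have "(1 - t) * (a j / real (s j)) + t * (b j / real (s j)) = 1" using ej by simp
      then have e0: "(1 - t) * (1 - a j / real (s j)) + t * (1 - b j / real (s j)) = 0"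
        by (simp add: algebra_simps)
      have p1: "(1 - t) * (1 - a j / real (s j)) \<ge> 0" using ba t by (intro mult_nonneg_nonneg) auto
      have p2: "t * (1 - b j / real (s j)) \<ge> 0" using bb t by (intro mult_nonneg_nonneg) auto
      have "(1 - t) * (1 - a j / real (s j)) = 0" "t * (1 - b j / real (s j)) = 0"
        using e0 p1 p2 by linarith+
      then show ?thesis using t by simp
    next
      case False
      then have "VV n s k j / real (s j) = 0" by (simp add: VV_def)
      then have "(1 - t) * (a j / real (s j)) + t * (b j / real (s j)) = 0" using ej by simp
      then have e0: "(1 - t) * (a j / real (s j)) + t * (b j / real (s j)) = 0" by simp
      have p1: "(1 - t) * (a j / real (s j)) \<ge> 0" using ba t by (intro mult_nonneg_nonneg) auto
      have p2: "t * (b j / real (s j)) \<ge> 0" using bb t by (intro mult_nonneg_nonneg) auto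
      have "(1 - t) * (a j / real (s j)) = 0" "t * (b j / real (s j)) = 0"
        using e0 p1 p2 by linarith+
      then show ?thesis using t sp by auto
    qed
    then show ?thesis using sp by (simp add: field_simps)
  next
    case False
    then have "j = 0 \<or> j > n" by auto
    then show ?thesis using a b by (auto simp: lhs_mem)
  qed
  then show False using ab by auto
qed

lemma vertex_is_VV:
  assumes v: "is_vertex (lecture_hall_simplex n s) v" and pos: "\<forall>i\<in>{1..n}. s i > 0"
  shows "\<exists>k\<le>n. v = VV n s k"
proof -
  let ?P = "lecture_hall_simplex n s"
  have vP: "v \<in> ?P" using v by (simp add: is_vertex_def)
  define Y where "Y i = v i / real (s i)" for i
  show ?thesis
  proof (cases "\<forall>i\<in>{1..n}. Y i = 0 \<or> Y i = 1")
    case True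
    define Z where "Z = {i\<in>{1..n}. Y i = 0}"
    define k where "k = (if Z = {} then 0 else Max Z)"
    have finZ: "finite Z" unfolding Z_def by simp
    have kn: "k \<le> n"
    proof (cases "Z = {}")
      case False
      then have "Max Z \<in> Z" using finZ Max_in by auto
      then show ?thesis using False unfolding k_def Z_def by auto
    qed (simp add: k_def)
    have "v j = VV n s k j" for j
    proof (cases "1 \<le> j \<and> j \<le> n")
      case jn: True
      have sp: "real (s j) > 0" using pos jn by auto
      show ?thesis
      proof (cases "j \<le> k")
        case True
        then have "Z \<noteq> {}" using jn unfolding k_def by (auto split: if_splits)
        then have kZ: "k \<in> Z" unfolding k_def using finZ Max_in by auto
        then have "Y k = 0" "1 \<le> k" "k \<le> n" unfolding Z_def by auto
        moreover have "Y j \<le> Y k" unfolding Y_def using lhs_chain[OF vP, of j k] jn True \<open>k \<le> n\<close> by auto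
        moreover have "0 \<le> Y j" unfolding Y_def using lhs_bounds[OF vP, of j] jn by auto
        ultimately have "Y j = 0" by simp
        then show ?thesis using sp True unfolding Y_def VV_def by auto
      next
        case False
        then have "j \<notin> Z" unfolding k_def using finZ Max_ge
          by (metis empty_iff leI less_imp_le_nat)
        then have "Y j = 1" using True jn unfolding Z_def by auto
        then show ?thesis using sp False jn unfolding Y_def VV_def by auto
      qed
    next
      case False
      then have "j = 0 \<or> n < j" by auto
      then show ?thesis using vP unfolding VV_def lhs_mem by auto
    qed
    then show ?thesis using kn by auto
  next
    case False
    then obtain i where i: "1 \<le> i" "i \<le> n" "Y i \<noteq> 0" "Y i \<noteq> 1" by auto
    have Yb: "0 \<le> Y j \<and> Y j \<le> 1" if "1 \<le> j" "j \<le> n" for j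
      using lhs_bounds[OF vP] that unfolding Y_def by auto
    define c where "c = Y i"
    have c: "0 < c" "c < 1" using Yb[OF i(1,2)] i unfolding c_def by auto
    define a where "a j = (if 1 \<le> j \<and> j \<le> n then real (s j) * (min (Y j) c / c) else 0)" for j
    define b where "b j = (if 1 \<le> j \<and> j \<le> n then real (s j) * (max (Y j - c) 0 / (1 - c)) else 0)" for j
    have sp: "real (s j) > 0" if "1 \<le> j" "j \<le> n" for j using pos that by auto
    have adiv: "a j / real (s j) = min (Y j) c / c" if "1 \<le> j" "j \<le> n" for j
      using sp[OF that] that unfolding a_def by simp
    have bdiv: "b j / real (s j) = max (Y j - c) 0 / (1 - c)" if "1 \<le> j" "j \<le> n" for j
      using sp[OF that] that unfolding b_def by simp
    have mono: "Y j \<le> Y (j+1)" if "1 \<le> j" "j < n" for j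
      using vP that unfolding Y_def by (auto simp: lhs_mem)
    have aP: "a \<in> ?P"
      unfolding lhs_mem
    proof (intro conjI allI impI ballI)
      fix j assume "j = 0 \<or> n < j" then show "a j = 0" unfolding a_def by auto
    next
      assume "1 \<le> n" then show "0 \<le> a 1 / real (s 1)" using adiv[of 1] Yb[of 1] c by simp
    next
      fix j assume "j \<in> {1..<n}"
      then show "a j / real (s j) \<le> a (j+1) / real (s (j+1))"
        using adiv[of j] adiv[of "j+1"] mono[of j] c by (simp add: divide_right_mono)
    next
      assume "1 \<le> n" then show "a n / real (s n) \<le> 1" using adiv[of n] c by simp
    qed
    have bP: "b \<in> ?P"
      unfolding lhs_mem
    proof (intro conjI allI impI ballI)
      fix j assume "j = 0 \<or> n < j" then show "b j = 0" unfolding b_def by auto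
    next
      assume "1 \<le> n" then show "0 \<le> b 1 / real (s 1)" using bdiv[of 1] c by simp
    next
      fix j assume "j \<in> {1..<n}"
      then show "b j / real (s j) \<le> b (j+1) / real (s (j+1))"
        using bdiv[of j] bdiv[of "j+1"] mono[of j] c by (simp add: divide_right_mono)
    next
      assume "1 \<le> n" then show "b n / real (s n) \<le> 1" using bdiv[of n] Yb[of n] c by simp
    qed
    have "a i \<noteq> b i" using adiv[OF i(1,2)] bdiv[OF i(1,2)] c sp[OF i(1,2)] unfolding c_def
      by auto
    then have ab: "a \<noteq> b" by auto
    have eq: "v = (\<lambda>j. (1 - (1 - c)) * a j + (1 - c) * b j)"
    proof
      fix j show "v j = (1 - (1 - c)) * a j + (1 - c) * b j"
      proof (cases "1 \<le> j \<and> j \<le> n")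
        case True
        have "v j = real (s j) * Y j" using sp[of j] True unfolding Y_def by simp
        also have "Y j = c * (min (Y j) c / c) + (1 - c) * (max (Y j - c) 0 / (1 - c))"
          proof -
          have "c * (min (Y j) c / c) = min (Y j) c" using c by simp
          moreover have "(1 - c) * (max (Y j - c) 0 / (1 - c)) = max (Y j - c) 0" using c by simp
          ultimately show ?thesis by (simp add: min_def max_def)
        qed
        finally show ?thesis unfolding a_def b_def using True by (simp add: algebra_simps)
      next
        case False
        then have "j = 0 \<or> n < j" by auto
        then show ?thesis using vP False unfolding a_def b_def lhs_mem by auto
      qed
    qed
    have "\<not> is_vertex ?P v"
      unfolding is_vertex_def
    proof (intro notI conjI, elim conjE)
      assume "\<not> (\<exists>a\<in>?P. \<exists>b\<in>?P. a \<noteq> b \<and> (\<exists>t>0. t < 1 \<and> v = (\<lambda>j. (1 - t) * a j + t * b j)))"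
      moreover have "0 < 1 - c" "1 - c < 1" using c by auto
      ultimately show False using aP bP ab eq by blast
    qed
    then show ?thesis using v by simp
  qed
qed


lemma vset:
  assumes pos: "\<forall>i\<in>{1..n}. s i > 0"
  shows "{v. is_vertex (lecture_hall_simplex n s) v} = VV n s ` {..n}"
  using VV_vertex[OF _ pos] vertex_is_VV[OF _ pos] by auto

lemma VV_inj:
  assumes pos: "\<forall>i\<in>{1..n}. s i > 0"
  shows "inj_on (VV n s) {..n}"
proof (rule inj_onI)
  fix k m assume k: "k \<in> {..n}" and m: "m \<in> {..n}" and eq: "VV n s k = VV n s m"
  show "k = m"
  proof (rule ccontr)
    assume "k \<noteq> m"
    then consider "k < m" | "m < k" by linarith
    then show False
    proof cases
      case 1
      have "VV n s k m = VV n s m m" using eq by simp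
      moreover have "s m > 0" using 1 m pos by auto
      ultimately show False using 1 m unfolding VV_def by auto
    next
      case 2
      have "VV n s k k = VV n s m k" using eq by simp
      moreover have "s k > 0" using 2 k pos by auto
      ultimately show False using 2 k unfolding VV_def by auto
    qed
  qed
qed

lemma VV_sum:
  "(\<Sum>k\<le>n. l k * VV n s k j) = (if 1 \<le> j \<and> j \<le> n then real (s j) * (\<Sum>k<j. l k) else 0)"
proof (cases "1 \<le> j \<and> j \<le> n")
  case True
  have "(\<Sum>k\<le>n. l k * VV n s k j) = (\<Sum>k\<in>{..n}. if k \<in> {k. k < j} then l k * real (s j) else 0)"
    using True by (intro sum.cong) (auto simp: VV_def)
  also have "\<dots> = (\<Sum>k\<in>{..n} \<inter> {k. k < j}. l k * real (s j))"
    by (rule sum.inter_restrict[symmetric]) simp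
  also have "{..n} \<inter> {k. k < j} = {..<j}" using True by auto
  finally show ?thesis using True by (simp add: sum_distrib_right[symmetric] mult.commute)
next
  case False
  then show ?thesis by (auto simp: VV_def)
qed

definition OP where
  "OP n s = {((\<lambda>j. if 1 \<le> j \<and> j \<le> n then real (s j) * (\<Sum>k<j. l k) else 0), \<Sum>k<n+1. l k) | l.
       \<forall>k\<le>n. 0 < l k \<and> l k < 1}"

lemma op_eq:
  assumes pos: "\<forall>i\<in>{1..n}. s i > 0"
  shows "open_parallelepiped (lecture_hall_simplex n s) = OP n s"
proof -
  have re: "(\<Sum>v\<in>{v. is_vertex (lecture_hall_simplex n s) v}. f v) = (\<Sum>k\<le>n. f (VV n s k))" for f :: "_ \<Rightarrow> real"
    unfolding vset[OF pos] by (simp add: sum.reindex[OF VV_inj[OF pos]])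
  have vx: "is_vertex (lecture_hall_simplex n s) v \<longleftrightarrow> (\<exists>k\<le>n. v = VV n s k)" for v
    using vset[OF pos] by auto
  show ?thesis
  proof (intro set_eqI iffI)
    fix p assume "p \<in> open_parallelepiped (lecture_hall_simplex n s)"
    then obtain lam where p: "p = ((\<lambda>j. \<Sum>v\<in>{v. is_vertex (lecture_hall_simplex n s) v}. lam v * v j),
        \<Sum>v\<in>{v. is_vertex (lecture_hall_simplex n s) v}. lam v)"
      and lb: "\<forall>v. is_vertex (lecture_hall_simplex n s) v \<longrightarrow> 0 < lam v \<and> lam v < 1"
      unfolding open_parallelepiped_def by blast
    define l where "l k = lam (VV n s k)" for k
    have "p = ((\<lambda>j. if 1 \<le> j \<and> j \<le> n then real (s j) * (\<Sum>k<j. l k) else 0), \<Sum>k<n+1. l k)"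
      unfolding p re l_def[symmetric] VV_sum by (simp add: lessThan_Suc_atMost)
    moreover have "\<forall>k\<le>n. 0 < l k \<and> l k < 1" using lb vx unfolding l_def by blast
    ultimately show "p \<in> OP n s" unfolding OP_def by blast
  next
    fix p assume "p \<in> OP n s"
    then obtain l where p: "p = ((\<lambda>j. if 1 \<le> j \<and> j \<le> n then real (s j) * (\<Sum>k<j. l k) else 0), \<Sum>k<n+1. l k)"
      and lb: "\<forall>k\<le>n. 0 < l k \<and> l k < 1" unfolding OP_def by blast
    define lam where "lam v = l (inv_into {..n} (VV n s) v)" for v
    have ll: "lam (VV n s k) = l k" if "k \<le> n" for k
      unfolding lam_def using inv_into_f_f[OF VV_inj[OF pos], of k] that by simp
    have s1: "(\<Sum>k\<le>n. lam (VV n s k) * VV n s k j) = (if 1 \<le> j \<and> j \<le> n then real (s j) * (\<Sum>k<j. l k) else 0)" for j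
    proof -
      have "(\<Sum>k\<le>n. lam (VV n s k) * VV n s k j) = (\<Sum>k\<le>n. l k * VV n s k j)"
        by (rule sum.cong) (auto simp: ll)
      then show ?thesis using VV_sum by simp
    qed
    have s2: "(\<Sum>k\<le>n. lam (VV n s k)) = (\<Sum>k\<le>n. l k)"
      by (rule sum.cong) (auto simp: ll)
    have "p = ((\<lambda>j. \<Sum>v\<in>{v. is_vertex (lecture_hall_simplex n s) v}. lam v * v j),
        \<Sum>v\<in>{v. is_vertex (lecture_hall_simplex n s) v}. lam v)"
      unfolding p re s1 s2 by (simp add: lessThan_Suc_atMost)
    moreover have "\<forall>v. is_vertex (lecture_hall_simplex n s) v \<longrightarrow> 0 < lam v \<and> lam v < 1"
      using vx ll lb by auto
    ultimately show "p \<in> open_parallelepiped (lecture_hall_simplex n s)"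
      unfolding open_parallelepiped_def by blast
  qed
qed


lemma key_floor:
  fixes a b :: real
  assumes "a < b" "b - a < 1"
  shows "frac a \<noteq> frac b \<and> \<lfloor>b\<rfloor> = \<lfloor>a\<rfloor> + (if frac b < frac a then 1 else 0)"
proof -
  define d where "d = \<lfloor>b\<rfloor> - \<lfloor>a\<rfloor>"
  have fa: "0 \<le> frac a" "frac a < 1" by (auto simp: frac_lt_1)
  have fb: "0 \<le> frac b" "frac b < 1" by (auto simp: frac_lt_1)
  have ba: "b - a = of_int d + (frac b - frac a)" unfolding d_def frac_def by simp
  have "of_int d > (-1::real)" using ba fa fb assms by linarith
  then have d0: "d \<ge> 0" by simp
  have "of_int d < (2::real)" using ba fa fb assms by linarith
  then have d1: "d \<le> 1" by simp
  show ?thesis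
  proof (cases "d = 0")
    case True
    then have "frac b > frac a" using ba assms by simp
    then show ?thesis using True unfolding d_def by simp
  next
    case False
    then have "d = 1" using d0 d1 by simp
    then have "frac b < frac a" using ba assms by simp
    then show ?thesis using \<open>d = 1\<close> unfolding d_def by simp
  qed
qed

definition DD where "DD n s e i = card {k. k < i \<and> ratio n s e (k+1) < ratio n s e k}"
definition LL where "LL n s e i = real (DD n s e i) + ratio n s e i"
definition gmap where
  "gmap n s e = ((\<lambda>j. if 1 \<le> j \<and> j \<le> n then real (s j) * LL n s e j else 0), LL n s e (n+1))"
definition LP where "LP n s = {p \<in> OP n s. (\<forall>j. fst p j \<in> \<int>) \<and> snd p \<in> \<int>}"

lemma DD_0: "DD n s e 0 = 0" unfolding DD_def by simp

lemma DD_Suc: "DD n s e (Suc i) = DD n s e i + (if ratio n s e (i+1) < ratio n s e i then 1 else 0)"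
proof -
  have fin: "finite {k. k < i \<and> ratio n s e (k+1) < ratio n s e k}" by simp
  show ?thesis
  proof (cases "ratio n s e (i+1) < ratio n s e i")
    case True
    then have "{k. k < Suc i \<and> ratio n s e (k+1) < ratio n s e k} =
      insert i {k. k < i \<and> ratio n s e (k+1) < ratio n s e k}" by auto
    then show ?thesis using True fin unfolding DD_def by simp
  next
    case False
    then have "{k. k < Suc i \<and> ratio n s e (k+1) < ratio n s e k} =
      {k. k < i \<and> ratio n s e (k+1) < ratio n s e k}" using less_Suc_eq by auto
    then show ?thesis using False unfolding DD_def by simp
  qed
qed

lemma sext_pos:
  assumes pos: "\<forall>i\<in>{1..n}. s i > 0" "i \<le> n + 1"
  shows "s_ext n s i > 0"
  using assms unfolding s_ext_def by auto

lemma ratio_bounds: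
  assumes pos: "\<forall>i\<in>{1..n}. s i > 0" and e: "e \<in> I_tilde n s"
  shows "0 \<le> ratio n s e i \<and> ratio n s e i < 1"
proof (cases "1 \<le> i \<and> i \<le> n")
  case True
  then have "s_ext n s i = s i" unfolding s_ext_def by auto
  moreover have "e i < s i" using e True unfolding I_tilde_def by auto
  ultimately show ?thesis unfolding ratio_def by simp
next
  case False
  then have "i = 0 \<or> i = n + 1 \<or> i > n + 1" by auto
  then have "e i = 0" using e unfolding I_tilde_def by auto
  then show ?thesis unfolding ratio_def by simp
qed

lemma ratio_0: "e \<in> I_tilde n s \<Longrightarrow> ratio n s e 0 = 0"
  unfolding I_tilde_def ratio_def by simp

lemma ratio_n1: "e \<in> I_tilde n s \<Longrightarrow> ratio n s e (n+1) = 0"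
  unfolding I_tilde_def ratio_def by simp

lemma LL_0: "e \<in> I_tilde n s \<Longrightarrow> LL n s e 0 = 0"
  unfolding LL_def by (simp add: DD_0 ratio_0)

lemma LL_step:
  assumes pos: "\<forall>i\<in>{1..n}. s i > 0" and e: "e \<in> I_tilde n s" and i: "i \<le> n"
  shows "0 < LL n s e (i+1) - LL n s e i \<and> LL n s e (i+1) - LL n s e i < 1"
proof -
  have ne: "ratio n s e i \<noteq> ratio n s e (i+1)" using e i unfolding I_tilde_def by auto
  have b1: "0 \<le> ratio n s e i \<and> ratio n s e i < 1" using ratio_bounds[OF pos e] by blast
  have b2: "0 \<le> ratio n s e (i+1) \<and> ratio n s e (i+1) < 1" using ratio_bounds[OF pos e] by blast
  have "LL n s e (i+1) - LL n s e i = (if ratio n s e (i+1) < ratio n s e i then 1 else 0) + ratio n s e (i+1) - ratio n s e i"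
    unfolding LL_def using DD_Suc[of n s e i] by simp
  then show ?thesis using ne b1 b2 by (auto split: if_splits)
qed

lemma des_DD: "des n s e = DD n s e (n+1)"
proof -
  have "{i\<in>{0..n}. ratio n s e i > ratio n s e (i+1)} = {k. k < n + 1 \<and> ratio n s e (k+1) < ratio n s e k}"
    by auto
  then show ?thesis unfolding des_def DD_def by simp
qed

lemma LL_tele:
  assumes e: "e \<in> I_tilde n s"
  shows "(\<Sum>k<j. LL n s e (k+1) - LL n s e k) = LL n s e j"
  using sum_lessThan_telescope[of "LL n s e" j] LL_0[OF e] by simp

lemma gmap_in:
  assumes pos: "\<forall>i\<in>{1..n}. s i > 0" and e: "e \<in> I_tilde n s"
  shows "gmap n s e \<in> LP n s"
proof -
  define l where "l k = LL n s e (k+1) - LL n s e k" for k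
  have "gmap n s e = ((\<lambda>j. if 1 \<le> j \<and> j \<le> n then real (s j) * (\<Sum>k<j. l k) else 0), \<Sum>k<n+1. l k)"
    unfolding gmap_def l_def LL_tele[OF e] by simp
  moreover have "\<forall>k\<le>n. 0 < l k \<and> l k < 1" using LL_step[OF pos e] unfolding l_def by blast
  ultimately have "gmap n s e \<in> OP n s" unfolding OP_def by blast
  moreover have "fst (gmap n s e) j \<in> \<int>" for j
  proof (cases "1 \<le> j \<and> j \<le> n")
    case True
    then have "s_ext n s j = s j" unfolding s_ext_def by auto
    moreover have "s j > 0" using pos True by auto
    ultimately have "real (s j) * LL n s e j = real (s j) * real (DD n s e j) + real (e j)"
      unfolding LL_def ratio_def by (simp add: field_simps)
    then show ?thesis using True unfolding gmap_def by simp
  next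
    case False
    then show ?thesis unfolding gmap_def by auto
  qed
  moreover have "snd (gmap n s e) \<in> \<int>"
    unfolding gmap_def LL_def using ratio_n1[OF e] by simp
  ultimately show ?thesis unfolding LP_def by blast
qed

lemma frac_LL:
  assumes pos: "\<forall>i\<in>{1..n}. s i > 0" and e: "e \<in> I_tilde n s"
  shows "frac (LL n s e j) = ratio n s e j"
proof -
  have "frac (real (DD n s e j) + ratio n s e j) = frac (ratio n s e j)"
    by (rule frac_add_int_left) simp
  then show ?thesis using ratio_bounds[OF pos e] frac_eq unfolding LL_def by simp
qed

lemma gmap_inj:
  assumes pos: "\<forall>i\<in>{1..n}. s i > 0"
  shows "inj_on (gmap n s) (I_tilde n s)"
proof (rule inj_onI)
  fix e e' assume e: "e \<in> I_tilde n s" and e': "e' \<in> I_tilde n s" and eq: "gmap n s e = gmap n s e'"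
  show "e = e'"
  proof
    fix j show "e j = e' j"
    proof (cases "1 \<le> j \<and> j \<le> n")
      case True
      have sp: "s j > 0" using pos True by auto
      have "fst (gmap n s e) j = fst (gmap n s e') j" using eq by simp
      then have "LL n s e j = LL n s e' j" using True sp unfolding gmap_def by simp
      then have "ratio n s e j = ratio n s e' j" using frac_LL[OF pos e] frac_LL[OF pos e'] by metis
      moreover have "s_ext n s j = s j" using True unfolding s_ext_def by auto
      ultimately show ?thesis using sp unfolding ratio_def by (simp add: field_simps)
    next
      case False
      then have "j = 0 \<or> j = n + 1 \<or> j > n + 1" by auto
      then show ?thesis using e e' unfolding I_tilde_def by auto
    qed
  qed
qed

lemma gmap_surj:
  assumes pos: "\<forall>i\<in>{1..n}. s i > 0" and p: "p \<in> LP n s"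
  shows "\<exists>e\<in>I_tilde n s. p = gmap n s e"
proof -
  obtain l where pl: "p = ((\<lambda>j. if 1 \<le> j \<and> j \<le> n then real (s j) * (\<Sum>k<j. l k) else 0), \<Sum>k<n+1. l k)"
    and lb: "\<forall>k\<le>n. 0 < l k \<and> l k < 1" using p unfolding LP_def OP_def by blast
  have pint: "\<forall>j. fst p j \<in> \<int>" "snd p \<in> \<int>" using p unfolding LP_def by auto
  define Lam where "Lam i = (\<Sum>k<i. l k)" for i
  have Lam0: "Lam 0 = 0" unfolding Lam_def by simp
  have LamS: "Lam (Suc i) = Lam i + l i" for i unfolding Lam_def by simp
  have xint: "real (s j) * Lam j \<in> \<int>" if "1 \<le> j" "j \<le> n" for j
    using pint(1) that unfolding pl Lam_def by (auto dest: spec[of _ j])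
  have hint: "Lam (n+1) \<in> \<int>" using pint(2) unfolding pl Lam_def by simp
  define e where "e i = (if 1 \<le> i \<and> i \<le> n then nat \<lfloor>real (s i) * frac (Lam i)\<rfloor> else 0)" for i
  have e_val: "real (e i) = real (s i) * frac (Lam i)" if i: "1 \<le> i" "i \<le> n" for i
  proof -
    obtain m :: int where m: "real (s i) * Lam i = of_int m" using xint[OF i] Ints_cases by blast
    have "real (s i) * frac (Lam i) = of_int (m - int (s i) * \<lfloor>Lam i\<rfloor>)"
      unfolding frac_def using m by (simp add: algebra_simps)
    moreover have "real (s i) * frac (Lam i) \<ge> 0" by simp
    ultimately show ?thesis unfolding e_def using i by simp
  qed
  have e_lt: "e i < s i" if i: "1 \<le> i" "i \<le> n" for i
  proof -
    have sp: "real (s i) > 0" using pos i by auto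
    have "real (s i) * frac (Lam i) < real (s i)" using sp frac_lt_1[of "Lam i"] by simp
    then show ?thesis using e_val[OF i] by simp
  qed
  have rat: "ratio n s e i = frac (Lam i)" if "i \<le> n + 1" for i
  proof -
    have "i = 0 \<or> i = n + 1 \<or> (1 \<le> i \<and> i \<le> n)" using that by linarith
    then consider "i = 0" | "i = n + 1" | "1 \<le> i \<and> i \<le> n" by blast
    then show ?thesis
    proof cases
      case 1 then show ?thesis unfolding ratio_def e_def by (simp add: Lam0)
    next
      case 2 then show ?thesis unfolding ratio_def e_def using hint by simp
    next
      case 3
      then have "s_ext n s i = s i" unfolding s_ext_def by auto
      moreover have "real (s i) > 0" using pos 3 by auto
      ultimately show ?thesis unfolding ratio_def using e_val 3 by simp
    qed
  qed
  have kf: "frac (Lam i) \<noteq> frac (Lam (i+1)) \<and> \<lfloor>Lam (i+1)\<rfloor> = \<lfloor>Lam i\<rfloor> + (if frac (Lam (i+1)) < frac (Lam i) then 1 else 0)"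
    if "i \<le> n" for i
    using key_floor[of "Lam i" "Lam (i+1)"] lb that LamS by simp
  have eI: "e \<in> I_tilde n s"
    unfolding I_tilde_def
  proof (intro CollectI conjI allI impI ballI)
    show "e 0 = 0" "e (n+1) = 0" unfolding e_def by auto
  next
    fix j assume "j > n + 1" then show "e j = 0" unfolding e_def by auto
  next
    fix i assume "i \<in> {1..n}" then show "e i < s i" using e_lt by auto
  next
    fix i assume "i \<in> {0..n}"
    then show "ratio n s e i \<noteq> ratio n s e (i+1)" using kf[of i] rat[of i] rat[of "i+1"] by auto
  qed
  have fl: "\<lfloor>Lam i\<rfloor> = int (DD n s e i)" if "i \<le> n + 1" for i
    using that
  proof (induction i)
    case 0 then show ?case by (simp add: Lam0 DD_0)
  next
    case (Suc i)
    then have "i \<le> n" by simp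
    then show ?case using kf[of i] rat[of i] rat[of "i+1"] Suc DD_Suc[of n s e i] by simp
  qed
  have LLeq: "LL n s e i = Lam i" if "i \<le> n + 1" for i
  proof -
    have "Lam i = of_int \<lfloor>Lam i\<rfloor> + frac (Lam i)" unfolding frac_def by simp
    then show ?thesis unfolding LL_def using fl[OF that] rat[OF that] by simp
  qed
  have f1: "(\<lambda>j. if 1 \<le> j \<and> j \<le> n then real (s j) * (\<Sum>k<j. l k) else 0) =
        (\<lambda>j. if 1 \<le> j \<and> j \<le> n then real (s j) * LL n s e j else 0)"
  proof
    fix j show "(if 1 \<le> j \<and> j \<le> n then real (s j) * (\<Sum>k<j. l k) else 0) =
        (if 1 \<le> j \<and> j \<le> n then real (s j) * LL n s e j else 0)"
      using LLeq[of j] unfolding Lam_def by auto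
  qed
  have f2: "(\<Sum>k<n+1. l k) = LL n s e (n+1)" using LLeq[of "n+1"] unfolding Lam_def by simp
  have "p = gmap n s e"
    unfolding pl gmap_def f1 f2 by simp
  then show ?thesis using eI by blast
qed

lemma gmap_bij:
  assumes pos: "\<forall>i\<in>{1..n}. s i > 0"
  shows "bij_betw (gmap n s) (I_tilde n s) (LP n s)"
  unfolding bij_betw_def using gmap_inj[OF pos] gmap_in[OF pos] gmap_surj[OF pos] by blast

lemma hstar_des:
  assumes pos: "\<forall>i\<in>{1..n}. s i > 0"
  shows "local_hstar (lecture_hall_simplex n s) = (\<Sum>e\<in>I_tilde n s. monom 1 (des n s e))"
proof -
  have "lattice_points (open_parallelepiped (lecture_hall_simplex n s)) = LP n s"
    unfolding op_eq[OF pos] lattice_points_def LP_def by simp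
  then have "local_hstar (lecture_hall_simplex n s) = (\<Sum>p\<in>LP n s. monom 1 (nat \<lfloor>snd p\<rfloor>))"
    unfolding local_hstar_def by simp
  also have "\<dots> = (\<Sum>e\<in>I_tilde n s. monom 1 (nat \<lfloor>snd (gmap n s e)\<rfloor>))"
    using sum.reindex_bij_betw[OF gmap_bij[OF pos], of "\<lambda>p. monom 1 (nat \<lfloor>snd p\<rfloor>)"] by (rule sym)
  also have "\<dots> = (\<Sum>e\<in>I_tilde n s. monom 1 (des n s e))"
  proof (rule sum.cong)
    fix e assume e: "e \<in> I_tilde n s"
    have "snd (gmap n s e) = real (DD n s e (n+1))" unfolding gmap_def LL_def using ratio_n1[OF e] by simp
    then show "monom 1 (nat \<lfloor>snd (gmap n s e)\<rfloor>) = monom (1::int) (des n s e)" by (simp add: des_DD)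
  qed simp
  finally show ?thesis .
qed


definition phi where "phi n s e i = (if e i = 0 then 0 else s_ext n s i - e i)"

lemma e_small:
  assumes "e \<in> I_tilde n s" "e i \<noteq> 0"
  shows "1 \<le> i \<and> i \<le> n \<and> e i < s i \<and> s_ext n s i = s i"
proof -
  have "1 \<le> i \<and> i \<le> n"
  proof (rule ccontr)
    assume "\<not> (1 \<le> i \<and> i \<le> n)"
    then have "i = 0 \<or> i = n + 1 \<or> i > n + 1" by auto
    then show False using assms unfolding I_tilde_def by auto
  qed
  then show ?thesis using assms unfolding I_tilde_def s_ext_def by auto
qed

lemma ratio_zero_iff:
  assumes "e \<in> I_tilde n s"
  shows "ratio n s e i = 0 \<longleftrightarrow> e i = 0"
proof (cases "e i = 0")
  case False
  note h = e_small[OF assms False]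
  then have "real (e i) / real (s_ext n s i) > 0" using False by simp
  then show ?thesis using False h unfolding ratio_def by simp
qed (simp add: ratio_def)

lemma ratio_phi:
  assumes e: "e \<in> I_tilde n s"
  shows "ratio n s (phi n s e) i = (if ratio n s e i = 0 then 0 else 1 - ratio n s e i)"
proof (cases "e i = 0")
  case True
  then show ?thesis unfolding ratio_def phi_def by simp
next
  case False
  note h = e_small[OF e False]
  then have "real (s i - e i) = real (s i) - real (e i)" by simp
  moreover have "real (s i) > 0" using h by simp
  ultimately show ?thesis using False h unfolding ratio_def phi_def by (simp add: field_simps)
qed

lemma phi_I:
  assumes e: "e \<in> I_tilde n s"
  shows "phi n s e \<in> I_tilde n s"
  unfolding I_tilde_def
proof (intro CollectI conjI allI impI ballI)
  show "phi n s e 0 = 0" "phi n s e (n+1) = 0" using e unfolding phi_def I_tilde_def by auto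
next
  fix j assume "j > n + 1" then show "phi n s e j = 0" using e unfolding phi_def I_tilde_def by auto
next
  fix i assume i: "i \<in> {1..n}"
  show "phi n s e i < s i"
  proof (cases "e i = 0")
    case True
    have "e i < s i" using e i unfolding I_tilde_def by auto
    then show ?thesis using True unfolding phi_def by simp
  next
    case False then show ?thesis using e_small[OF e False] unfolding phi_def by auto
  qed
next
  fix i assume i: "i \<in> {0..n}"
  have ne: "ratio n s e i \<noteq> ratio n s e (i+1)" using e i unfolding I_tilde_def by auto
  have "ratio n s e (i+1) < 1" using e_small[OF e, of "i+1"] unfolding ratio_def
    by (cases "e (i+1) = 0") auto
  moreover have "ratio n s e i < 1" using e_small[OF e, of "i"] unfolding ratio_def
    by (cases "e i = 0") auto
  ultimately show "ratio n s (phi n s e) i \<noteq> ratio n s (phi n s e) (i+1)"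
    unfolding ratio_phi[OF e] using ne by auto
qed

lemma phi_phi:
  assumes e: "e \<in> I_tilde n s"
  shows "phi n s (phi n s e) = e"
proof
  fix i show "phi n s (phi n s e) i = e i"
  proof (cases "e i = 0")
    case True then show ?thesis unfolding phi_def by simp
  next
    case False then show ?thesis using e_small[OF e False] unfolding phi_def by auto
  qed
qed

lemma phi_bij:
  shows "bij_betw (phi n s) (I_tilde n s) (I_tilde n s)"
  by (rule bij_betw_byWitness[where f' = "phi n s"]) (auto simp: phi_phi phi_I)

lemma card_int: "finite A \<Longrightarrow> int (card {x\<in>A. P x}) = (\<Sum>x\<in>A. if P x then 1 else 0)"
proof -
  assume "finite A"
  have "int (card {x\<in>A. P x}) = (\<Sum>x\<in>{x\<in>A. P x}. (1::int))" by simp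
  also have "\<dots> = (\<Sum>x\<in>A. if P x then 1 else 0)" by (rule sum.inter_filter) fact
  finally show ?thesis .
qed

lemma des_phi:
  assumes e: "e \<in> I_tilde n s"
  shows "des n s (phi n s e) = asc n s e"
proof -
  define r where "r i = ratio n s e i" for i
  define z where "z i = (if r i = 0 then 0 else 1::int)" for i
  have rb: "0 \<le> r i \<and> r i < 1" for i
    using e_small[OF e, of i] unfolding r_def ratio_def by (cases "e i = 0") auto
  have ne: "r i \<noteq> r (i+1)" if "i \<in> {0..n}" for i using e that unfolding I_tilde_def r_def by auto
  have rp: "ratio n s (phi n s e) i = (if r i = 0 then 0 else 1 - r i)" for i
    unfolding r_def using ratio_phi[OF e] by simp
  have per: "(if ratio n s (phi n s e) i > ratio n s (phi n s e) (i+1) then 1 else 0) +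
      (if r i > r (i+1) then 1 else 0) = 1 - z (i+1) + (z i :: int)" if "i \<in> {0..n}" for i
    unfolding rp z_def using rb[of i] rb[of "i+1"] ne[OF that] by auto
  have per2: "(if r i < r (i+1) then 1 else 0) + (if r i > r (i+1) then 1 else 0) = (1::int)"
    if "i \<in> {0..n}" for i using ne[OF that] by auto
  have tele: "(\<Sum>i\<in>{0..n}. z i - z (Suc i)) = 0"
  proof -
    have "{0..n} = {..<Suc n}" by auto
    then have "(\<Sum>i\<in>{0..n}. z i - z (Suc i)) = z 0 - z (Suc n)"
      using sum_lessThan_telescope'[of z "Suc n"] by simp
    also have "\<dots> = 0" unfolding z_def r_def using ratio_0[OF e] ratio_n1[OF e] by simp
    finally show ?thesis .
  qed
  have "int (des n s (phi n s e)) + int (des n s e) =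
      (\<Sum>i\<in>{0..n}. (if ratio n s (phi n s e) i > ratio n s (phi n s e) (i+1) then 1 else 0) +
        (if r i > r (i+1) then 1 else 0))"
    unfolding des_def r_def card_int[OF finite_atLeastAtMost] by (simp add: sum.distrib)
  also have "\<dots> = (\<Sum>i\<in>{0..n}. 1 + (z i - z (i+1)))"
  proof (rule sum.cong)
    fix i assume i: "i \<in> {0..n}"
    show "(if ratio n s (phi n s e) i > ratio n s (phi n s e) (i+1) then 1 else 0) +
        (if r i > r (i+1) then 1 else 0) = 1 + (z i - z (i+1))"
      using per[OF i] by linarith
  qed simp
  also have "\<dots> = int (n+1)" using tele by (simp add: sum.distrib)
  finally have A: "int (des n s (phi n s e)) + int (des n s e) = int (n+1)" .
  have "int (asc n s e) + int (des n s e) =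
      (\<Sum>i\<in>{0..n}. (if r i < r (i+1) then 1 else 0) + (if r i > r (i+1) then 1 else 0))"
    unfolding des_def asc_def r_def card_int[OF finite_atLeastAtMost] by (simp add: sum.distrib)
  also have "\<dots> = (\<Sum>i\<in>{0..n}. (1::int))"
  proof (rule sum.cong)
    fix i assume i: "i \<in> {0..n}"
    show "(if r i < r (i+1) then 1 else 0) + (if r i > r (i+1) then 1 else 0) = (1::int)"
      using per2[OF i] by linarith
  qed simp
  also have "\<dots> = int (n+1)" by simp
  finally have B: "int (asc n s e) + int (des n s e) = int (n+1)" .
  show ?thesis using A B by simp
qed

theorem proposition3p3:
  fixes n :: nat and s :: "nat \<Rightarrow> nat"
  assumes "\<forall>i\<in>{1..n}. s i > 0"
  shows "local_hstar (lecture_hall_simplex n s) = (\<Sum>e\<in>I_tilde n s. monom 1 (asc n s e))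
       \<and> local_hstar (lecture_hall_simplex n s) = (\<Sum>e\<in>I_tilde n s. monom 1 (des n s e))"
proof -
  have "(\<Sum>e\<in>I_tilde n s. monom (1::int) (des n s e)) = (\<Sum>e\<in>I_tilde n s. monom 1 (des n s (phi n s e)))"
    using sum.reindex_bij_betw[OF phi_bij, of "\<lambda>e. monom (1::int) (des n s e)" n s] by simp
  also have "\<dots> = (\<Sum>e\<in>I_tilde n s. monom 1 (asc n s e))"
    by (rule sum.cong) (simp_all add: des_phi)
  finally show ?thesis using hstar_des[OF assms] by simp
qed

end
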